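(* Let $m,n\ge 1$ and let $\lambda\subseteq\nu$ be partitions contained in the rectangle $(n-1)^{m-1}$. Then $\mathrm{PASM}(\nu/\lambda,m,n)$ is exactly the set of real $m\times n$ matrices $X=(X_{ij})$ satisfying all of the following: (1) $0\le \sum_{i'=1}^{i} X_{i'j}\le 1$ for all $1\le i\le m$, $1\le j\le n$; (2) $0\le \sum_{j'=1}^{j} X_{ij'}\le 1$ for all $1\le i\le m$, $1\le j\le n$; (3) $\sum_{i=1}^{m} X_{i1}=1$ and $\sum_{j=1}^{n} X_{1j}=1$; (4) $\sum_{j=1}^{n} X_{ij}=0$ for $2\le i\le m$, and $\sum_{i=1}^{m} X_{ij}=0$ for $2\le j\le n$; (5) $X_{ij}=0$ whenever $j\le\lambda_i$; (6) $X_{ij}=0$ whenever $i>1$ and $\nu_{i-1}+1<j\le n$, and $X_{1j}=0$ whenever $\nu_1+1<j\le n$.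
   Context: A partition $\mu=(\mu_1\ge\mu_2\ge\cdots)$ is a weakly decreasing sequence of nonnegative integers with finitely many nonzero terms; $\ell(\mu)$ denotes its number of positive parts. We identify $\mu$ with the set of matrix positions $\{(i,j): i\ge1,\ 1\le j\le\mu_i\}$. We write $\mu\subseteq\nu$ if $\mu_i\le\nu_i$ for all $i$, and $\mu\subseteq a^b$ (the $b\times a$ rectangle) if $\ell(\mu)\le b$ and $\mu_1\le a$. For a partition $\mu\subseteq(n-1)^{m-1}$, the $m\times n$ matrix $M^\mu=M^\mu(m,n)$ has entries: $M^\mu_{1,\mu_1+1}=1$; for each $1\le k\le m-1$ with $\mu_k>\mu_{k+1}$, $M^\mu_{k+1,\mu_{k+1}+1}=1$ and $M^\mu_{k+1,\mu_k+1}=-1$; all other entries are $0$. For partitions $\lambda\subseteq\nu\subseteq(n-1)^{m-1}$, $\mathrm{PASM}(\nu/\lambda,m,n)$ is the convex hull in $\mathbb{R}^{mn}$ of the matrices $M^\mu(m,n)$ over all partitions $\mu$ with $\lambda\subseteq\mu\subseteq\nu$. *)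

theory Defs
  imports "HOL-Analysis.Analysis" "HOL-Library.Function_Algebras"
begin

(* Real-valued functions form a real vector space pointwise; this lets us
   view m x n real matrices as functions nat => nat => real and use the
   library's convex hull. *)
instantiation "fun" :: (type, real_vector) real_vector
begin
definition scaleR_fun :: "real \<Rightarrow> ('a \<Rightarrow> 'b) \<Rightarrow> 'a \<Rightarrow> 'b" where
  "scaleR_fun r f = (\<lambda>x. r *\<^sub>R f x)"
instance
  by standard (auto simp: scaleR_fun_def fun_eq_iff scaleR_add_right scaleR_add_left)
end

(* A partition is a function mu :: nat => nat, mu i being the i-th part
   (indices start at 1; the value at index 0 is ignored). *)
definition is_partition :: "(nat \<Rightarrow> nat) \<Rightarrow> bool" where
  "is_partition \<mu> \<longleftrightarrow> (\<forall>i\<ge>1. \<mu> (Suc i) \<le> \<mu> i) \<and> finite {i. 1 \<le> i \<and> 0 < \<mu> i}"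

definition part_le :: "(nat \<Rightarrow> nat) \<Rightarrow> (nat \<Rightarrow> nat) \<Rightarrow> bool" where
  "part_le \<mu> \<nu> \<longleftrightarrow> (\<forall>i\<ge>1. \<mu> i \<le> \<nu> i)"

definition in_rect :: "(nat \<Rightarrow> nat) \<Rightarrow> nat \<Rightarrow> nat \<Rightarrow> bool" where
  "in_rect \<mu> a b \<longleftrightarrow> (\<forall>i>b. \<mu> i = 0) \<and> \<mu> 1 \<le> a"

(* real matrices indexed by 1-based (i,j); an m x n matrix is one vanishing
   outside {1..m} x {1..n} *)
type_synonym rmat = "nat \<Rightarrow> nat \<Rightarrow> real"

definition is_mat :: "nat \<Rightarrow> nat \<Rightarrow> rmat \<Rightarrow> bool" where
  "is_mat m n X \<longleftrightarrow> (\<forall>i j. \<not> (1 \<le> i \<and> i \<le> m \<and> 1 \<le> j \<and> j \<le> n) \<longrightarrow> X i j = 0)"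

definition Mmat :: "(nat \<Rightarrow> nat) \<Rightarrow> nat \<Rightarrow> nat \<Rightarrow> rmat" where
  "Mmat \<mu> m n = (\<lambda>i j.
     if 1 \<le> i \<and> i \<le> m \<and> 1 \<le> j \<and> j \<le> n then
       (if i = 1 then (if j = \<mu> 1 + 1 then 1 else 0)
        else if \<mu> (i - 1) > \<mu> i then
          (if j = \<mu> i + 1 then 1 else if j = \<mu> (i - 1) + 1 then -1 else 0)
        else 0)
     else 0)"

definition PASM :: "(nat \<Rightarrow> nat) \<Rightarrow> (nat \<Rightarrow> nat) \<Rightarrow> nat \<Rightarrow> nat \<Rightarrow> rmat set" where
  "PASM \<nu> lam m n = convex hull
     {Mmat \<mu> m n | \<mu>. is_partition \<mu> \<and> part_le lam \<mu> \<and> part_le \<mu> \<nu>}"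

end

theory Submission
  imports Defs
begin

lemma scaleR_fun_app[simp]: "((a::real) *\<^sub>R (X::rmat)) i j = a * X i j"
  by (simp add: scaleR_fun_def)

definition Fm :: "rmat \<Rightarrow> nat \<Rightarrow> nat \<Rightarrow> real" where
  "Fm X i j = (\<Sum>i'=1..i. \<Sum>j'=1..j. X i' j')"

lemma Fm_0i[simp]: "Fm X 0 j = 0" by (simp add: Fm_def)
lemma Fm_0j[simp]: "Fm X i 0 = 0" by (simp add: Fm_def)

lemma Fm_row: "1 \<le> i \<Longrightarrow> Fm X i j = Fm X (i-1) j + (\<Sum>j'=1..j. X i j')"
  by (cases i) (auto simp: Fm_def)

lemma Fm_col: "1 \<le> j \<Longrightarrow> Fm X i j = Fm X i (j-1) + (\<Sum>i'=1..i. X i' j)"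
  by (cases j) (auto simp: Fm_def sum.distrib)

lemma R_as_F: "1 \<le> i \<Longrightarrow> (\<Sum>j'=1..j. X i j') = Fm X i j - Fm X (i-1) j"
  using Fm_row[of i X j] by simp
lemma C_as_F: "1 \<le> j \<Longrightarrow> (\<Sum>i'=1..i. X i' j) = Fm X i j - Fm X i (j-1)"
  using Fm_col[of j X i] by simp

lemma X_as_F: assumes "1 \<le> i" "1 \<le> j"
  shows "X i j = Fm X i j - Fm X (i-1) j - Fm X i (j-1) + Fm X (i-1) (j-1)"
proof -
  have "(\<Sum>j'=1..j. X i j') = (\<Sum>j'=1..j-1. X i j') + X i j"
    using assms(2) by (cases j) auto
  then show ?thesis using R_as_F[OF assms(1), of X j] R_as_F[OF assms(1), of X "j-1"] by simp
qed

lemma sum_lin: "(\<Sum>i\<in>A. (c::real) * (a i - t * b i)) = c * ((\<Sum>i\<in>A. a i) - t * (\<Sum>i\<in>A. b i))"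
proof -
  have "(\<Sum>i\<in>A. c * (a i - t * b i)) = (\<Sum>i\<in>A. c * a i - c * t * b i)"
    by (rule sum.cong) (auto simp: algebra_simps)
  also have "\<dots> = c * (\<Sum>i\<in>A. a i) - c * t * (\<Sum>i\<in>A. b i)"
    by (simp add: sum_subtractf sum_distrib_left)
  finally show ?thesis by (simp add: algebra_simps)
qed

lemma Fm_lin: "Fm (\<lambda>i j. c * (X i j - t * Z i j)) i j = c * (Fm X i j - t * Fm Z i j)"
  unfolding Fm_def by (simp add: sum_lin)

lemma mat_eq_F: assumes "is_mat m n X" "is_mat m n Z"
    "\<And>i j. i \<le> m \<Longrightarrow> j \<le> n \<Longrightarrow> Fm X i j = Fm Z i j"
  shows "X = Z"
proof (intro ext)
  fix i j
  show "X i j = Z i j"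
  proof (cases "1 \<le> i \<and> i \<le> m \<and> 1 \<le> j \<and> j \<le> n")
    case True
    have e1: "Fm X i j = Fm Z i j" by (rule assms(3)) (use True in auto)
    have e2: "Fm X (i-1) j = Fm Z (i-1) j" by (rule assms(3)) (use True in auto)
    have e3: "Fm X i (j-1) = Fm Z i (j-1)" by (rule assms(3)) (use True in auto)
    have e4: "Fm X (i-1) (j-1) = Fm Z (i-1) (j-1)" by (rule assms(3)) (use True in auto)
    show ?thesis using X_as_F[of i j X] X_as_F[of i j Z] True e1 e2 e3 e4 by simp
  next
    case False
    then show ?thesis using assms(1,2) unfolding is_mat_def by auto
  qed
qed

lemma part_mono: assumes "is_partition \<mu>" "1 \<le> i" "i \<le> k" shows "\<mu> k \<le> \<mu> i"
  using assms(3)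
proof (induction k rule: dec_induct)
  case base then show ?case by simp
next
  case (step k)
  have "\<mu> (Suc k) \<le> \<mu> k" using assms(1,2) step(1) unfolding is_partition_def by simp
  then show ?case using step by linarith
qed

lemma CM: assumes "is_partition \<mu>" "i \<le> m" "1 \<le> j" "j \<le> n"
  shows "(\<Sum>i'=1..i. Mmat \<mu> m n i' j) = (if 1 \<le> i \<and> j = \<mu> i + 1 then 1 else 0)"
  using assms(2)
proof (induction i)
  case 0 then show ?case by simp
next
  case (Suc i)
  have IH: "(\<Sum>i'=1..i. Mmat \<mu> m n i' j) = (if 1 \<le> i \<and> j = \<mu> i + 1 then 1 else 0)" using Suc by simp
  show ?case
  proof (cases "i = 0")
    case True then show ?thesis using assms(3,4) Suc.prems by (simp add: Mmat_def)
  next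
    case False
    have le: "\<mu> (Suc i) \<le> \<mu> i" using assms(1) False unfolding is_partition_def by simp
    have Mv: "Mmat \<mu> m n (Suc i) j = (if \<mu> (Suc i) < \<mu> i then (if j = \<mu> (Suc i) + 1 then 1
        else if j = \<mu> i + 1 then -1 else 0) else 0)"
      using Suc.prems assms(3,4) False by (simp add: Mmat_def)
    have S: "(\<Sum>i'=1..Suc i. Mmat \<mu> m n i' j) = (\<Sum>i'=1..i. Mmat \<mu> m n i' j) + Mmat \<mu> m n (Suc i) j"
      by simp
    show ?thesis unfolding S Mv IH using False le
      by (cases "\<mu> (Suc i) < \<mu> i"; cases "j = \<mu> (Suc i) + 1"; cases "j = \<mu> i + 1") simp_all
  qed
qed

lemma FM: assumes "is_partition \<mu>" "i \<le> m" "j \<le> n"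
  shows "Fm (Mmat \<mu> m n) i j = (if 1 \<le> i \<and> \<mu> i < j then 1 else 0)"
  using assms(3)
proof (induction j)
  case 0 then show ?case by simp
next
  case (Suc j)
  have "Fm (Mmat \<mu> m n) i (Suc j) = Fm (Mmat \<mu> m n) i j + (\<Sum>i'=1..i. Mmat \<mu> m n i' (Suc j))"
    using Fm_col[of "Suc j"] by simp
  moreover have "(\<Sum>i'=1..i. Mmat \<mu> m n i' (Suc j)) = (if 1 \<le> i \<and> Suc j = \<mu> i + 1 then 1 else 0)"
    by (rule CM[OF assms(1,2)]) (use Suc.prems in auto)
  moreover have "Fm (Mmat \<mu> m n) i j = (if 1 \<le> i \<and> \<mu> i < j then 1 else 0)"
    using Suc.IH Suc.prems by simp
  ultimately show ?case by (cases "1 \<le> i"; cases "\<mu> i < j"; cases "Suc j = \<mu> i + 1") simp_all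
qed

lemma downclosed_card:
  assumes "\<And>j j'. P j' \<Longrightarrow> 1 \<le> j \<Longrightarrow> j \<le> j' \<Longrightarrow> j' \<le> n \<Longrightarrow> P j"
  shows "\<forall>j\<in>{1..n}. (P j \<longleftrightarrow> j \<le> card {j\<in>{1..n}. P j})"
proof (cases "{j\<in>{1..n}. P j} = {}")
  case True
  have "\<forall>j\<in>{1..n}. \<not> P j" using True by auto
  then show ?thesis unfolding True card.empty by auto
next
  case False
  define S where "S = {j\<in>{1..n}. P j}"
  define k where "k = Max S"
  have fS: "finite S" unfolding S_def by simp
  have "S \<noteq> {}" using False S_def by simp
  then have kS: "k \<in> S" using Max_in fS k_def by simp
  have "S = {1..k}"
  proof
    show "S \<subseteq> {1..k}"
    proof
      fix x assume x: "x \<in> S"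
      then have "1 \<le> x" unfolding S_def by simp
      moreover have "x \<le> k" unfolding k_def using Max_ge[OF fS x] .
      ultimately show "x \<in> {1..k}" by simp
    qed
    show "{1..k} \<subseteq> S"
    proof
      fix x assume x: "x \<in> {1..k}"
      have Pk: "P k" "k \<le> n" using kS unfolding S_def by auto
      have "P x" using assms[OF Pk(1) _ _ Pk(2)] x by simp
      then show "x \<in> S" unfolding S_def using x Pk(2) by simp
    qed
  qed
  then have cS: "card S = k" by simp
  show ?thesis
  proof
    fix j assume j: "j \<in> {1..n}"
    have "P j \<longleftrightarrow> j \<in> S" unfolding S_def using j by simp
    also have "\<dots> \<longleftrightarrow> j \<le> k" using \<open>S = {1..k}\<close> j by simp
    finally show "P j \<longleftrightarrow> j \<le> card {j\<in>{1..n}. P j}" using cS S_def by simp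
  qed
qed


definition Rset :: "nat \<Rightarrow> nat \<Rightarrow> (nat \<Rightarrow> nat) \<Rightarrow> (nat \<Rightarrow> nat) \<Rightarrow> rmat set" where
  "Rset m n lam \<nu> = {X :: rmat. is_mat m n X
      \<and> (\<forall>i\<in>{1..m}. \<forall>j\<in>{1..n}. 0 \<le> (\<Sum>i'=1..i. X i' j) \<and> (\<Sum>i'=1..i. X i' j) \<le> 1)
      \<and> (\<forall>i\<in>{1..m}. \<forall>j\<in>{1..n}. 0 \<le> (\<Sum>j'=1..j. X i j') \<and> (\<Sum>j'=1..j. X i j') \<le> 1)
      \<and> (\<Sum>i=1..m. X i 1) = 1 \<and> (\<Sum>j=1..n. X 1 j) = 1
      \<and> (\<forall>i\<in>{2..m}. (\<Sum>j=1..n. X i j) = 0)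
      \<and> (\<forall>j\<in>{2..n}. (\<Sum>i=1..m. X i j) = 0)
      \<and> (\<forall>i\<in>{1..m}. \<forall>j\<in>{1..n}. j \<le> lam i \<longrightarrow> X i j = 0)
      \<and> (\<forall>i\<in>{2..m}. \<forall>j. \<nu> (i - 1) + 1 < j \<and> j \<le> n \<longrightarrow> X i j = 0)
      \<and> (\<forall>j. \<nu> 1 + 1 < j \<and> j \<le> n \<longrightarrow> X 1 j = 0)}"

definition Sset :: "nat \<Rightarrow> nat \<Rightarrow> (nat \<Rightarrow> nat) \<Rightarrow> (nat \<Rightarrow> nat) \<Rightarrow> rmat set" where
  "Sset m n lam \<nu> = {Mmat \<mu> m n | \<mu>. is_partition \<mu> \<and> part_le lam \<mu> \<and> part_le \<mu> \<nu>}"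

lemma cvx1: "0 \<le> (u::real) \<Longrightarrow> 0 \<le> v \<Longrightarrow> 0 \<le> a \<Longrightarrow> 0 \<le> b \<Longrightarrow> 0 \<le> u * a + v * b"
  by simp
lemma cvx2: "0 \<le> (u::real) \<Longrightarrow> 0 \<le> v \<Longrightarrow> u + v = 1 \<Longrightarrow> a \<le> 1 \<Longrightarrow> b \<le> 1 \<Longrightarrow> u * a + v * b \<le> 1"
proof -
  assume h: "0 \<le> u" "0 \<le> v" "u + v = 1" "a \<le> 1" "b \<le> 1"
  have "u * a \<le> u" using h mult_left_le by blast
  moreover have "v * b \<le> v" using h mult_left_le by blast
  ultimately show ?thesis using h by linarith
qed

lemma Rset_convex: "convex (Rset m n lam \<nu>)"
  unfolding convex_def
proof (intro ballI allI impI)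
  fix X Y :: rmat and u v :: real
  assume X: "X \<in> Rset m n lam \<nu>" and Y: "Y \<in> Rset m n lam \<nu>" and uv: "0 \<le> u" "0 \<le> v" "u + v = 1"
  define Z where "Z = u *\<^sub>R X + v *\<^sub>R Y"
  have Zij: "\<And>i j. Z i j = u * X i j + v * Y i j" by (simp add: Z_def)
  have sumi: "\<And>A j. (\<Sum>i\<in>A. Z i j) = u * (\<Sum>i\<in>A. X i j) + v * (\<Sum>i\<in>A. Y i j)"
    by (simp add: Zij sum.distrib sum_distrib_left)
  have sumj: "\<And>A i. (\<Sum>j\<in>A. Z i j) = u * (\<Sum>j\<in>A. X i j) + v * (\<Sum>j\<in>A. Y i j)"
    by (simp add: Zij sum.distrib sum_distrib_left)
  note XR = X[unfolded Rset_def mem_Collect_eq] and YR = Y[unfolded Rset_def mem_Collect_eq]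
  have d1: "is_mat m n Z" using XR YR unfolding is_mat_def by (simp add: Zij)
  have d2: "\<forall>i\<in>{1..m}. \<forall>j\<in>{1..n}. 0 \<le> (\<Sum>i'=1..i. Z i' j) \<and> (\<Sum>i'=1..i. Z i' j) \<le> 1"
  proof (intro ballI)
    fix i j assume i: "i \<in> {1..m}" and j: "j \<in> {1..n}"
    have a: "0 \<le> (\<Sum>i'=1..i. X i' j) \<and> (\<Sum>i'=1..i. X i' j) \<le> 1" using XR i j by blast
    have b: "0 \<le> (\<Sum>i'=1..i. Y i' j) \<and> (\<Sum>i'=1..i. Y i' j) \<le> 1" using YR i j by blast
    show "0 \<le> (\<Sum>i'=1..i. Z i' j) \<and> (\<Sum>i'=1..i. Z i' j) \<le> 1"
      unfolding sumi using a b uv cvx1 cvx2 by blast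
  qed
  have d3: "\<forall>i\<in>{1..m}. \<forall>j\<in>{1..n}. 0 \<le> (\<Sum>j'=1..j. Z i j') \<and> (\<Sum>j'=1..j. Z i j') \<le> 1"
  proof (intro ballI)
    fix i j assume i: "i \<in> {1..m}" and j: "j \<in> {1..n}"
    have a: "0 \<le> (\<Sum>j'=1..j. X i j') \<and> (\<Sum>j'=1..j. X i j') \<le> 1" using XR i j by blast
    have b: "0 \<le> (\<Sum>j'=1..j. Y i j') \<and> (\<Sum>j'=1..j. Y i j') \<le> 1" using YR i j by blast
    show "0 \<le> (\<Sum>j'=1..j. Z i j') \<and> (\<Sum>j'=1..j. Z i j') \<le> 1"
      unfolding sumj using a b uv cvx1 cvx2 by blast
  qed
  have d4: "(\<Sum>i=1..m. Z i 1) = 1" unfolding sumi using XR YR uv by simp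
  have d5: "(\<Sum>j=1..n. Z 1 j) = 1" unfolding sumj using XR YR uv by simp
  have d6: "\<forall>i\<in>{2..m}. (\<Sum>j=1..n. Z i j) = 0" unfolding sumj using XR YR by simp
  have d7: "\<forall>j\<in>{2..n}. (\<Sum>i=1..m. Z i j) = 0" unfolding sumi using XR YR by simp
  have d8: "\<forall>i\<in>{1..m}. \<forall>j\<in>{1..n}. j \<le> lam i \<longrightarrow> Z i j = 0" unfolding Zij using XR YR by simp
  have d9: "\<forall>i\<in>{2..m}. \<forall>j. \<nu> (i - 1) + 1 < j \<and> j \<le> n \<longrightarrow> Z i j = 0" unfolding Zij using XR YR by simp
  have d10: "\<forall>j. \<nu> 1 + 1 < j \<and> j \<le> n \<longrightarrow> Z 1 j = 0" unfolding Zij using XR YR by simp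
  have "Z \<in> Rset m n lam \<nu>" unfolding Rset_def mem_Collect_eq by (intro conjI d1 d2 d3 d4 d5 d6 d7 d8 d9 d10)
  then show "u *\<^sub>R X + v *\<^sub>R Y \<in> Rset m n lam \<nu>" by (simp add: Z_def)
qed

context
  fixes m n :: nat and lam \<nu> :: "nat \<Rightarrow> nat"
  assumes m1: "1 \<le> m" and n1: "1 \<le> n"
    and plam: "is_partition lam" and pnu: "is_partition \<nu>"
    and lamnu: "part_le lam \<nu>"
    and rect: "in_rect \<nu> (n - 1) (m - 1)"
begin

lemma valid_M:
  assumes pmu: "is_partition \<mu>" and lm: "part_le lam \<mu>" and mn: "part_le \<mu> \<nu>"
  shows "Mmat \<mu> m n \<in> Rset m n lam \<nu>"
proof -
  let ?M = "Mmat \<mu> m n"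
  have mun: "\<And>i. 1 \<le> i \<Longrightarrow> \<mu> i < n"
  proof -
    fix i :: nat assume "1 \<le> i"
    then have "\<mu> i \<le> \<mu> 1" using part_mono[OF pmu] by simp
    moreover have "\<mu> 1 \<le> \<nu> 1" using mn unfolding part_le_def by simp
    moreover have "\<nu> 1 \<le> n - 1" using rect unfolding in_rect_def by simp
    ultimately show "\<mu> i < n" using n1 by linarith
  qed
  have mum: "\<mu> m = 0"
  proof -
    have "\<nu> m = 0" using rect m1 unfolding in_rect_def by simp
    then show ?thesis using mn m1 unfolding part_le_def by (metis le_zero_eq)
  qed
  have mudec: "\<And>i. 2 \<le> i \<Longrightarrow> \<mu> i \<le> \<mu> (i-1)"
    using part_mono[OF pmu] by simp
  have lamle: "\<And>i. 1 \<le> i \<Longrightarrow> lam i \<le> \<mu> i" using lm unfolding part_le_def by simp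
  have munu: "\<And>i. 1 \<le> i \<Longrightarrow> \<mu> i \<le> \<nu> i" using mn unfolding part_le_def by simp
  have nudec: "\<And>i. 2 \<le> i \<Longrightarrow> \<nu> i \<le> \<nu> (i-1)"
    using part_mono[OF pnu] by simp
  have c1: "is_mat m n ?M" unfolding is_mat_def Mmat_def by simp
  have c2: "\<forall>i\<in>{1..m}. \<forall>j\<in>{1..n}. 0 \<le> (\<Sum>i'=1..i. ?M i' j) \<and> (\<Sum>i'=1..i. ?M i' j) \<le> 1"
    using CM[OF pmu] by simp
  have c3: "\<forall>i\<in>{1..m}. \<forall>j\<in>{1..n}. 0 \<le> (\<Sum>j'=1..j. ?M i j') \<and> (\<Sum>j'=1..j. ?M i j') \<le> 1"
  proof (intro ballI)
    fix i j assume i: "i \<in> {1..m}" and j: "j \<in> {1..n}"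
    have "(\<Sum>j'=1..j. ?M i j') = Fm ?M i j - Fm ?M (i-1) j" using R_as_F i by simp
    also have "\<dots> = (if \<mu> i < j then 1 else 0) - (if 1 \<le> i - 1 \<and> \<mu> (i-1) < j then 1 else 0)"
    proof -
      have f1: "Fm ?M i j = (if 1 \<le> i \<and> \<mu> i < j then 1 else 0)" by (rule FM[OF pmu]) (use i j in auto)
      have f2: "Fm ?M (i-1) j = (if 1 \<le> i - 1 \<and> \<mu> (i-1) < j then 1 else 0)" by (rule FM[OF pmu]) (use i j in auto)
      show ?thesis unfolding f1 f2 using i by simp
    qed
    finally show "0 \<le> (\<Sum>j'=1..j. ?M i j') \<and> (\<Sum>j'=1..j. ?M i j') \<le> 1"
      using mudec[of i] by (cases "2 \<le> i") auto
  qed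
  have c4: "(\<Sum>i=1..m. ?M i 1) = 1" using CM[OF pmu, of m m 1 n] mum n1 m1 by simp
  have c5: "(\<Sum>j=1..n. ?M 1 j) = 1" using R_as_F[of 1 ?M n] FM[OF pmu, of 1 m n n] m1 mun[of 1] by simp
  have c6: "\<forall>i\<in>{2..m}. (\<Sum>j=1..n. ?M i j) = 0"
  proof
    fix i assume i: "i \<in> {2..m}"
    have f1: "Fm ?M i n = 1" using FM[OF pmu, of i m n n] mun[of i] i by simp
    have h: "1 \<le> i - 1" "i - 1 \<le> m" using i by auto
    have f2: "Fm ?M (i-1) n = 1" using FM[OF pmu h(2) order_refl[of n]] mun[OF h(1)] h by simp
    show "(\<Sum>j=1..n. ?M i j) = 0" using R_as_F[of i ?M n] f1 f2 i by simp
  qed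
  have c7: "\<forall>j\<in>{2..n}. (\<Sum>i=1..m. ?M i j) = 0"
  proof
    fix j assume j: "j \<in> {2..n}"
    have "(\<Sum>i=1..m. ?M i j) = (if 1 \<le> m \<and> j = \<mu> m + 1 then 1 else 0)"
      by (rule CM[OF pmu]) (use j in auto)
    then show "(\<Sum>i=1..m. ?M i j) = 0" using mum j by simp
  qed
  have c8: "\<forall>i\<in>{1..m}. \<forall>j\<in>{1..n}. j \<le> lam i \<longrightarrow> ?M i j = 0"
  proof (intro ballI impI)
    fix i j assume i: "i \<in> {1..m}" and j: "j \<in> {1..n}" and jl: "j \<le> lam i"
    have a: "j \<le> \<mu> i" using lamle[of i] i jl by simp
    show "?M i j = 0"
    proof (cases "i = 1")
      case True then show ?thesis using a unfolding Mmat_def by simp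
    next
      case False
      then have b: "j \<le> \<mu> (i-1)" using a mudec[of i] i by simp
      show ?thesis using False a b unfolding Mmat_def by simp
    qed
  qed
  have c9: "\<forall>i\<in>{2..m}. \<forall>j. \<nu> (i - 1) + 1 < j \<and> j \<le> n \<longrightarrow> ?M i j = 0"
  proof (intro ballI allI impI)
    fix i j assume i: "i \<in> {2..m}" and j: "\<nu> (i - 1) + 1 < j \<and> j \<le> n"
    have i1: "1 \<le> i - 1" using i by auto
    have b: "\<mu> (i-1) + 1 < j" using munu[OF i1] j by simp
    have a: "\<mu> i + 1 < j" using b mudec[of i] i by simp
    have "i \<noteq> 1" using i by simp
    then show "?M i j = 0" using a b unfolding Mmat_def by simp
  qed
  have c10: "\<forall>j. \<nu> 1 + 1 < j \<and> j \<le> n \<longrightarrow> ?M 1 j = 0"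
  proof (intro allI impI)
    fix j assume "\<nu> 1 + 1 < j \<and> j \<le> n"
    then have "\<mu> 1 + 1 < j" using munu[of 1] by simp
    then show "?M 1 j = 0" unfolding Mmat_def by simp
  qed
  show ?thesis unfolding Rset_def mem_Collect_eq by (intro conjI c1 c2 c3 c4 c5 c6 c7 c8 c9 c10)
qed

end

definition gt :: "real \<Rightarrow> real \<Rightarrow> real" where
  "gt t v = (1 / (1 - t)) * (v - t * (if 0 < v then 1 else 0))"

lemma gstep:
  fixes t a b :: real
  assumes t: "0 < t" "t < 1" and a: "a = 0 \<or> (t \<le> a \<and> a \<le> 1)" and b: "b = 0 \<or> (t \<le> b \<and> b \<le> 1)"
    and ab: "a \<le> b"
  shows "0 \<le> gt t b - gt t a \<and> gt t b - gt t a \<le> 1"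
proof -
  have c: "0 < 1 - t" using t by simp
  show ?thesis
  proof (cases "a = 0")
    case True
    show ?thesis
    proof (cases "b = 0")
      case True
      then show ?thesis using \<open>a = 0\<close> by (simp add: gt_def)
    next
      case False
      then have b': "t \<le> b" "b \<le> 1" using b by auto
      then have "0 < b" using t by simp
      then have e: "gt t b - gt t a = (b - t) / (1 - t)" using \<open>a = 0\<close> by (simp add: gt_def algebra_simps)
      show ?thesis unfolding e using b' c by (simp add: divide_simps)
    qed
  next
    case False
    then have a': "t \<le> a" "a \<le> 1" using a by auto
    then have b': "t \<le> b" "b \<le> 1" using b ab t by auto
    have "0 < a" "0 < b" using a' b' t by auto
    then have e: "gt t b - gt t a = (b - a) / (1 - t)" by (simp add: gt_def algebra_simps diff_divide_distrib)
    show ?thesis unfolding e using a' b' c ab by (simp add: divide_simps)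
  qed
qed

lemma gt0[simp]: "gt t 0 = 0" by (simp add: gt_def)
lemma gt1: "t < 1 \<Longrightarrow> gt t 1 = 1" by (simp add: gt_def)
lemma gtt: "0 < t \<Longrightarrow> gt t t = 0" by (simp add: gt_def)

definition muX :: "nat \<Rightarrow> nat \<Rightarrow> rmat \<Rightarrow> nat \<Rightarrow> nat" where
  "muX m n X i = (if 1 \<le> i \<and> i \<le> m then card {j\<in>{1..n}. Fm X i j = 0} else 0)"

definition Vs :: "nat \<Rightarrow> nat \<Rightarrow> rmat \<Rightarrow> real set" where
  "Vs m n X = {Fm X i j | i j. i \<in> {1..m} \<and> j \<in> {1..n} \<and> 0 < Fm X i j \<and> Fm X i j < 1}"

lemma finite_Vs: "finite (Vs m n X)"
proof -
  have "Vs m n X \<subseteq> (\<lambda>(i,j). Fm X i j) ` ({1..m} \<times> {1..n})" unfolding Vs_def by auto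
  then show ?thesis by (rule finite_subset) simp
qed

context
  fixes m n :: nat and lam \<nu> :: "nat \<Rightarrow> nat"
  assumes m1: "1 \<le> m" and n1: "1 \<le> n"
    and plam: "is_partition lam" and pnu: "is_partition \<nu>"
    and lamnu: "part_le lam \<nu>"
    and rect: "in_rect \<nu> (n - 1) (m - 1)"
begin

context
  fixes X :: rmat
  assumes X: "X \<in> Rset m n lam \<nu>"
begin

lemmas XR = X[unfolded Rset_def mem_Collect_eq]

lemma F1: "i \<in> {1..m} \<Longrightarrow> j \<in> {1..n} \<Longrightarrow> 0 \<le> Fm X i j - Fm X i (j-1) \<and> Fm X i j - Fm X i (j-1) \<le> 1"
proof -
  assume i: "i \<in> {1..m}" and j: "j \<in> {1..n}"
  have "0 \<le> (\<Sum>i'=1..i. X i' j) \<and> (\<Sum>i'=1..i. X i' j) \<le> 1" using XR i j by blast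
  then show ?thesis using C_as_F[of j X i] j by simp
qed

lemma F2: "i \<in> {1..m} \<Longrightarrow> j \<in> {1..n} \<Longrightarrow> 0 \<le> Fm X i j - Fm X (i-1) j \<and> Fm X i j - Fm X (i-1) j \<le> 1"
proof -
  assume i: "i \<in> {1..m}" and j: "j \<in> {1..n}"
  have "0 \<le> (\<Sum>j'=1..j. X i j') \<and> (\<Sum>j'=1..j. X i j') \<le> 1" using XR i j by blast
  then show ?thesis using R_as_F[of i X j] i by simp
qed

lemma F3: "1 \<le> i \<Longrightarrow> i \<le> m \<Longrightarrow> Fm X i n = 1"
proof (induction i)
  case 0 then show ?case by simp
next
  case (Suc k)
  have e: "Fm X (Suc k) n = Fm X k n + (\<Sum>j'=1..n. X (Suc k) j')" using Fm_row[of "Suc k" X n] by simp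
  show ?case
  proof (cases "k = 0")
    case True
    have "(\<Sum>j'=1..n. X 1 j') = 1" using XR by blast
    then show ?thesis using e True by simp
  next
    case False
    have "Suc k \<in> {2..m}" using False Suc.prems by simp
    then have "(\<Sum>j'=1..n. X (Suc k) j') = 0" using XR by blast
    moreover have "Fm X k n = 1" using Suc.IH Suc.prems False by simp
    ultimately show ?thesis using e by simp
  qed
qed

lemma F4: "i \<in> {1..m} \<Longrightarrow> j \<le> lam i \<Longrightarrow> Fm X i j = 0"
proof -
  assume i: "i \<in> {1..m}" and j: "j \<le> lam i"
  have "\<forall>i'\<in>{1..i}. \<forall>j'\<in>{1..j}. X i' j' = 0"
  proof (intro ballI)
    fix i' j' assume i': "i' \<in> {1..i}" and j': "j' \<in> {1..j}"
    show "X i' j' = 0"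
    proof (cases "j' \<le> n")
      case True
      have "lam i \<le> lam i'" using part_mono[OF plam, of i' i] i' by simp
      then have "j' \<le> lam i'" using j j' by simp
      moreover have "i' \<in> {1..m}" "j' \<in> {1..n}" using i i' j' True by auto
      ultimately show ?thesis using XR by blast
    next
      case False
      then show ?thesis using XR unfolding is_mat_def by simp
    qed
  qed
  then show ?thesis unfolding Fm_def by simp
qed

lemma F5a: "1 \<le> i \<Longrightarrow> i \<le> m \<Longrightarrow> \<forall>j. \<nu> i + 1 < j \<and> j \<le> n \<longrightarrow> (\<Sum>i'=1..i. X i' j) = 0"
proof -
  assume i1: "1 \<le> i" and im: "i \<le> m"
  show ?thesis using im
  proof (induction i rule: inc_induct)
    case base
    show ?case
    proof (intro allI impI)
      fix j assume j: "\<nu> m + 1 < j \<and> j \<le> n"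
      then have "j \<in> {2..n}" by simp
      then show "(\<Sum>i'=1..m. X i' j) = 0" using XR by blast
    qed
  next
    case (step k)
    have k1: "1 \<le> k" using step.hyps i1 by simp
    have nk: "\<nu> (Suc k) \<le> \<nu> k" using pnu k1 unfolding is_partition_def by simp
    show ?case
    proof (intro allI impI)
      fix j assume j: "\<nu> k + 1 < j \<and> j \<le> n"
      have a: "(\<Sum>i'=1..Suc k. X i' j) = 0" using step.IH j nk by simp
      have "Suc k \<in> {2..m}" using k1 step.hyps by simp
      then have b: "X (Suc k) j = 0" using XR j by auto
      show "(\<Sum>i'=1..k. X i' j) = 0" using a b by simp
    qed
  qed
qed

lemma F5: "i \<in> {1..m} \<Longrightarrow> \<nu> i < j \<Longrightarrow> j \<le> n \<Longrightarrow> Fm X i j = 1"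
proof -
  assume i: "i \<in> {1..m}" and j1: "\<nu> i < j" and jn: "j \<le> n"
  show ?thesis using jn
  proof (induction j rule: inc_induct)
    case base then show ?case using F3 i by simp
  next
    case (step k)
    have "Fm X i (Suc k) = Fm X i k + (\<Sum>i'=1..i. X i' (Suc k))" using Fm_col[of "Suc k" X i] by simp
    moreover have "(\<Sum>i'=1..i. X i' (Suc k)) = 0" using F5a[of i] i j1 step.hyps by auto
    ultimately show ?case using step.IH by simp
  qed
qed

lemma Gmono_j: "i \<le> m \<Longrightarrow> j \<le> j' \<Longrightarrow> j' \<le> n \<Longrightarrow> Fm X i j \<le> Fm X i j'"
proof -
  assume im: "i \<le> m" and jj: "j \<le> j'" and jn: "j' \<le> n"
  show ?thesis
  proof (cases "i = 0")
    case True then show ?thesis by simp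
  next
    case False
    show ?thesis using jj jn
    proof (induction j' rule: dec_induct)
      case base then show ?case by simp
    next
      case (step k)
      have "0 \<le> Fm X i (Suc k) - Fm X i (Suc k - 1)" using F1[of i "Suc k"] False im step.prems by auto
      then show ?case using step by simp
    qed
  qed
qed

lemma Gmono_i: "i \<le> i' \<Longrightarrow> i' \<le> m \<Longrightarrow> j \<le> n \<Longrightarrow> Fm X i j \<le> Fm X i' j"
proof -
  assume ii: "i \<le> i'" and im: "i' \<le> m" and jn: "j \<le> n"
  show ?thesis
  proof (cases "j = 0")
    case True then show ?thesis by simp
  next
    case False
    show ?thesis using ii im
    proof (induction i' rule: dec_induct)
      case base then show ?case by simp
    next
      case (step k)
      have "0 \<le> Fm X (Suc k) j - Fm X (Suc k - 1) j" using F2[of "Suc k" j] False jn step.prems by auto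
      then show ?case using step by simp
    qed
  qed
qed

lemma Gnn: "i \<le> m \<Longrightarrow> j \<le> n \<Longrightarrow> 0 \<le> Fm X i j"
  using Gmono_i[of 0 i j] by simp

lemma Gle1: "i \<le> m \<Longrightarrow> j \<le> n \<Longrightarrow> Fm X i j \<le> 1"
proof -
  assume im: "i \<le> m" and jn: "j \<le> n"
  show ?thesis
  proof (cases "i = 0")
    case True then show ?thesis by simp
  next
    case False
    then have "Fm X i n = 1" using F3 im by simp
    then show ?thesis using Gmono_j[OF im jn order_refl] by simp
  qed
qed

lemma mu_char: "1 \<le> i \<Longrightarrow> i \<le> m \<Longrightarrow> j \<le> n \<Longrightarrow> (Fm X i j = 0 \<longleftrightarrow> j \<le> muX m n X i)"
proof -
  assume i1: "1 \<le> i" and im: "i \<le> m" and jn: "j \<le> n"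
  have D: "\<forall>j\<in>{1..n}. (Fm X i j = 0 \<longleftrightarrow> j \<le> card {j\<in>{1..n}. Fm X i j = 0})"
  proof (rule downclosed_card)
    fix j j' assume "Fm X i j' = 0" "1 \<le> j" "j \<le> j'" "j' \<le> n"
    then show "Fm X i j = 0" using Gnn[OF im, of j] Gmono_j[OF im, of j j'] by simp
  qed
  show ?thesis
  proof (cases "j = 0")
    case True then show ?thesis by simp
  next
    case False
    then show ?thesis using D jn i1 im unfolding muX_def by simp
  qed
qed

lemma mu_lt: "muX m n X i < n"
proof (cases "1 \<le> i \<and> i \<le> m")
  case True
  have "Fm X i n = 1" using F3 True by simp
  then have "\<not> n \<le> muX m n X i" using mu_char[of i n] True by simp
  then show ?thesis by simp
next
  case False then show ?thesis unfolding muX_def using n1 by auto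
qed

lemma mu_part: "is_partition (muX m n X)"
  unfolding is_partition_def
proof (intro conjI allI impI)
  fix i :: nat assume i1: "1 \<le> i"
  show "muX m n X (Suc i) \<le> muX m n X i"
  proof (cases "Suc i \<le> m")
    case True
    show ?thesis
    proof (cases "muX m n X (Suc i) = 0")
      case True then show ?thesis by simp
    next
      case False
      define k where "k = muX m n X (Suc i)"
      have kn: "k \<le> n" using mu_lt[of "Suc i"] k_def by simp
      have "Fm X (Suc i) k = 0" using mu_char[of "Suc i" k] True kn k_def by simp
      moreover have "Fm X i k \<le> Fm X (Suc i) k" using Gmono_i[of i "Suc i" k] True kn by simp
      moreover have "0 \<le> Fm X i k" using Gnn[of i k] True kn by simp
      ultimately have "Fm X i k = 0" by simp
      then have "k \<le> muX m n X i" using mu_char[of i k] True kn i1 by simp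
      then show ?thesis using k_def by simp
    qed
  next
    case False then show ?thesis unfolding muX_def by simp
  qed
next
  have "{i. 1 \<le> i \<and> 0 < muX m n X i} \<subseteq> {1..m}" unfolding muX_def by auto
  then show "finite {i. 1 \<le> i \<and> 0 < muX m n X i}" by (rule finite_subset) simp
qed

lemma mu_lam: "part_le lam (muX m n X)"
  unfolding part_le_def
proof (intro allI impI)
  fix i :: nat assume i1: "1 \<le> i"
  show "lam i \<le> muX m n X i"
  proof (cases "i \<le> m")
    case True
    show ?thesis
    proof (rule ccontr)
      assume "\<not> lam i \<le> muX m n X i"
      then have a: "muX m n X i + 1 \<le> lam i" by simp
      have b: "muX m n X i + 1 \<le> n" using mu_lt[of i] by simp
      have "Fm X i (muX m n X i + 1) = 0" using F4[of i] a True i1 by simp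
      then show False using mu_char[of i "muX m n X i + 1"] True i1 b by simp
    qed
  next
    case False
    have "\<nu> i = 0" using rect False unfolding in_rect_def by simp
    moreover have "lam i \<le> \<nu> i" using lamnu i1 unfolding part_le_def by simp
    ultimately show ?thesis by simp
  qed
qed

lemma mu_nu: "part_le (muX m n X) \<nu>"
  unfolding part_le_def
proof (intro allI impI)
  fix i :: nat assume i1: "1 \<le> i"
  show "muX m n X i \<le> \<nu> i"
  proof (cases "i \<le> m")
    case True
    show ?thesis
    proof (cases "\<nu> i < n")
      case True
      have "Fm X i (\<nu> i + 1) = 1" using F5[of i "\<nu> i + 1"] True \<open>i \<le> m\<close> i1 by simp
      then have "\<not> \<nu> i + 1 \<le> muX m n X i" using mu_char[of i "\<nu> i + 1"] True \<open>i \<le> m\<close> i1 by simp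
      then show ?thesis by simp
    next
      case False then show ?thesis using mu_lt[of i] by simp
    qed
  next
    case False then show ?thesis unfolding muX_def by simp
  qed
qed

lemma FMX: "i \<le> m \<Longrightarrow> j \<le> n \<Longrightarrow> Fm (Mmat (muX m n X) m n) i j = (if 0 < Fm X i j then 1 else 0)"
proof -
  assume im: "i \<le> m" and jn: "j \<le> n"
  have e: "Fm (Mmat (muX m n X) m n) i j = (if 1 \<le> i \<and> muX m n X i < j then 1 else 0)"
    by (rule FM[OF mu_part im jn])
  show ?thesis
  proof (cases "i = 0")
    case True then show ?thesis using e by simp
  next
    case False
    then have "(Fm X i j = 0 \<longleftrightarrow> j \<le> muX m n X i)" using mu_char[of i j] im jn by simp
    then show ?thesis using e False Gnn[OF im jn] by auto
  qed
qed

end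

end

context
  fixes m n :: nat and lam \<nu> :: "nat \<Rightarrow> nat"
  assumes m1: "1 \<le> m" and n1: "1 \<le> n"
    and plam: "is_partition lam" and pnu: "is_partition \<nu>"
    and lamnu: "part_le lam \<nu>"
    and rect: "in_rect \<nu> (n - 1) (m - 1)"
begin

lemmas hyps = m1 n1 plam pnu lamnu rect

lemma main: "X \<in> Rset m n lam \<nu> \<Longrightarrow> X \<in> convex hull (Sset m n lam \<nu>)"
proof (induction "card (Vs m n X)" arbitrary: X rule: less_induct)
  case less
  note X = less.prems
  note XR = X[unfolded Rset_def mem_Collect_eq]
  define P where "P = {Fm X i j | i j. i \<in> {1..m} \<and> j \<in> {1..n} \<and> 0 < Fm X i j}"
  have fP: "finite P"
  proof -
    have "P \<subseteq> (\<lambda>(i,j). Fm X i j) ` ({1..m} \<times> {1..n})" unfolding P_def by auto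
    then show ?thesis by (rule finite_subset) simp
  qed
  have F31: "Fm X 1 n = 1" using F3[OF hyps X, of 1] m1 by simp
  have oneP: "1 \<in> P" unfolding P_def using F31 m1 n1 by force
  define t where "t = Min P"
  have tP: "t \<in> P" unfolding t_def using fP oneP Min_in by blast
  have t1: "t \<le> 1" unfolding t_def using fP oneP Min_le by blast
  have t0: "0 < t" using tP unfolding P_def by auto
  have tmin: "\<And>i j. i \<in> {1..m} \<Longrightarrow> j \<in> {1..n} \<Longrightarrow> 0 < Fm X i j \<Longrightarrow> t \<le> Fm X i j"
    unfolding t_def using fP by (intro Min_le) (auto simp: P_def)
  have gap: "\<And>i j. i \<le> m \<Longrightarrow> j \<le> n \<Longrightarrow> Fm X i j = 0 \<or> (t \<le> Fm X i j \<and> Fm X i j \<le> 1)"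
  proof -
    fix i j assume im: "i \<le> m" and jn: "j \<le> n"
    show "Fm X i j = 0 \<or> (t \<le> Fm X i j \<and> Fm X i j \<le> 1)"
    proof (cases "i = 0 \<or> j = 0")
      case True then show ?thesis by auto
    next
      case False
      then show ?thesis using tmin[of i j] Gnn[OF hyps X im jn] Gle1[OF hyps X im jn] im jn by force
    qed
  qed
  define \<mu> where "\<mu> = muX m n X"
  define M where "M = Mmat \<mu> m n"
  have mp: "is_partition \<mu>" "part_le lam \<mu>" "part_le \<mu> \<nu>"
    unfolding \<mu>_def using mu_part[OF hyps X] mu_lam[OF hyps X] mu_nu[OF hyps X] by auto
  have MS: "M \<in> Sset m n lam \<nu>" unfolding Sset_def M_def using mp by blast
  have MR: "M \<in> Rset m n lam \<nu>" unfolding M_def by (rule valid_M[OF hyps mp])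
  note MR' = MR[unfolded Rset_def mem_Collect_eq]
  have FMX': "\<And>i j. i \<le> m \<Longrightarrow> j \<le> n \<Longrightarrow> Fm M i j = (if 0 < Fm X i j then 1 else 0)"
    unfolding M_def \<mu>_def by (rule FMX[OF hyps X])
  have MH: "M \<in> convex hull (Sset m n lam \<nu>)" using MS by (rule hull_inc)
  show ?case
  proof (cases "t = 1")
    case True
    have "X = M"
    proof (rule mat_eq_F[of m n])
      show "is_mat m n X" using XR by blast
      show "is_mat m n M" using MR' by blast
      fix i j assume im: "i \<le> m" and jn: "j \<le> n"
      show "Fm X i j = Fm M i j" using gap[OF im jn] FMX'[OF im jn] True by auto
    qed
    then show ?thesis using MH by simp
  next
    case False
    then have t1': "t < 1" using t1 by simp
    define Y where "Y = (\<lambda>i j. (1 / (1 - t)) * (X i j - t * M i j))"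
    have FY: "\<And>i j. i \<le> m \<Longrightarrow> j \<le> n \<Longrightarrow> Fm Y i j = gt t (Fm X i j)"
      unfolding Y_def Fm_lin gt_def using FMX' by simp
    have e1: "is_mat m n Y" using XR MR' unfolding is_mat_def Y_def by simp
    have e2: "\<forall>i\<in>{1..m}. \<forall>j\<in>{1..n}. 0 \<le> (\<Sum>i'=1..i. Y i' j) \<and> (\<Sum>i'=1..i. Y i' j) \<le> 1"
    proof (intro ballI)
      fix i j assume i: "i \<in> {1..m}" and j: "j \<in> {1..n}"
      have im: "i \<le> m" and jn: "j \<le> n" "j - 1 \<le> n" using i j by auto
      have "(\<Sum>i'=1..i. Y i' j) = Fm Y i j - Fm Y i (j-1)" using C_as_F[of j Y i] j by simp
      also have "\<dots> = gt t (Fm X i j) - gt t (Fm X i (j-1))" using FY[OF im jn(1)] FY[OF im jn(2)] by simp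
      finally show "0 \<le> (\<Sum>i'=1..i. Y i' j) \<and> (\<Sum>i'=1..i. Y i' j) \<le> 1"
        using gstep[OF t0 t1' gap[OF im jn(2)] gap[OF im jn(1)]] F1[OF hyps X i j] by simp
    qed
    have e3: "\<forall>i\<in>{1..m}. \<forall>j\<in>{1..n}. 0 \<le> (\<Sum>j'=1..j. Y i j') \<and> (\<Sum>j'=1..j. Y i j') \<le> 1"
    proof (intro ballI)
      fix i j assume i: "i \<in> {1..m}" and j: "j \<in> {1..n}"
      have im: "i \<le> m" "i - 1 \<le> m" and jn: "j \<le> n" using i j by auto
      have "(\<Sum>j'=1..j. Y i j') = Fm Y i j - Fm Y (i-1) j" using R_as_F[of i Y j] i by simp
      also have "\<dots> = gt t (Fm X i j) - gt t (Fm X (i-1) j)" using FY[OF im(1) jn] FY[OF im(2) jn] by simp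
      finally show "0 \<le> (\<Sum>j'=1..j. Y i j') \<and> (\<Sum>j'=1..j. Y i j') \<le> 1"
        using gstep[OF t0 t1' gap[OF im(2) jn] gap[OF im(1) jn]] F2[OF hyps X i j] by simp
    qed
    have e4: "(\<Sum>i=1..m. Y i 1) = 1" unfolding Y_def sum_lin using XR MR' t1' by simp
    have e5: "(\<Sum>j=1..n. Y 1 j) = 1" unfolding Y_def sum_lin using XR MR' t1' by simp
    have e6: "\<forall>i\<in>{2..m}. (\<Sum>j=1..n. Y i j) = 0" unfolding Y_def sum_lin using XR MR' by simp
    have e7: "\<forall>j\<in>{2..n}. (\<Sum>i=1..m. Y i j) = 0" unfolding Y_def sum_lin using XR MR' by simp
    have e8: "\<forall>i\<in>{1..m}. \<forall>j\<in>{1..n}. j \<le> lam i \<longrightarrow> Y i j = 0" unfolding Y_def using XR MR' by simp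
    have e9: "\<forall>i\<in>{2..m}. \<forall>j. \<nu> (i - 1) + 1 < j \<and> j \<le> n \<longrightarrow> Y i j = 0" unfolding Y_def using XR MR' by simp
    have e10: "\<forall>j. \<nu> 1 + 1 < j \<and> j \<le> n \<longrightarrow> Y 1 j = 0" unfolding Y_def using XR MR' by simp
    have YR: "Y \<in> Rset m n lam \<nu>" unfolding Rset_def mem_Collect_eq
      by (intro conjI e1 e2 e3 e4 e5 e6 e7 e8 e9 e10)
    have sub: "Vs m n Y \<subseteq> gt t ` (Vs m n X - {t})"
    proof
      fix v assume "v \<in> Vs m n Y"
      then obtain i j where ij: "i \<in> {1..m}" "j \<in> {1..n}" and v: "v = Fm Y i j" "0 < v" "v < 1"
        unfolding Vs_def by blast
      have im: "i \<le> m" and jn: "j \<le> n" using ij by auto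
      have vg: "v = gt t (Fm X i j)" using FY[OF im jn] v by simp
      have "Fm X i j \<noteq> 0" using vg v by auto
      then have a: "t \<le> Fm X i j" "Fm X i j \<le> 1" using gap[OF im jn] by auto
      have b: "Fm X i j \<noteq> t" using vg v gtt[OF t0] by auto
      have c: "Fm X i j \<noteq> 1" using vg v gt1[OF t1'] by auto
      have "Fm X i j \<in> Vs m n X - {t}" unfolding Vs_def using ij a b c t0 by force
      then show "v \<in> gt t ` (Vs m n X - {t})" using vg by blast
    qed
    have tV: "t \<in> Vs m n X" using tP t1' unfolding P_def Vs_def by auto
    have "card (Vs m n Y) \<le> card (gt t ` (Vs m n X - {t}))"
      by (rule card_mono) (use sub finite_Vs in auto)
    also have "\<dots> \<le> card (Vs m n X - {t})" by (rule card_image_le) (simp add: finite_Vs)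
    also have "\<dots> < card (Vs m n X)" by (rule card_Diff1_less[OF finite_Vs tV])
    finally have lt: "card (Vs m n Y) < card (Vs m n X)" .
    have YH: "Y \<in> convex hull (Sset m n lam \<nu>)" by (rule less.hyps[OF lt YR])
    have XE: "X = t *\<^sub>R M + (1 - t) *\<^sub>R Y"
    proof (intro ext)
      fix i j
      have nz: "1 - t \<noteq> 0" using t1' by simp
      have h: "(1 - t) * (1 / (1 - t) * z) = z" for z using nz by simp
      have "(t *\<^sub>R M + (1 - t) *\<^sub>R Y) i j = t * M i j + (1 - t) * (1 / (1 - t) * (X i j - t * M i j))"
        by (simp add: Y_def)
      also have "\<dots> = t * M i j + (X i j - t * M i j)" by (simp only: h)
      finally show "X i j = (t *\<^sub>R M + (1 - t) *\<^sub>R Y) i j" by simp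
    qed
    show ?thesis unfolding XE by (rule convexD[OF convex_convex_hull MH YH]) (use t0 t1' in auto)
  qed
qed

lemma PASM_eq: "PASM \<nu> lam m n = Rset m n lam \<nu>"
proof
  show "PASM \<nu> lam m n \<subseteq> Rset m n lam \<nu>"
    unfolding PASM_def
  proof (rule hull_minimal)
    show "{Mmat \<mu> m n |\<mu>. is_partition \<mu> \<and> part_le lam \<mu> \<and> part_le \<mu> \<nu>} \<subseteq> Rset m n lam \<nu>"
      using valid_M[OF hyps] by blast
    show "convex (Rset m n lam \<nu>)" by (rule Rset_convex)
  qed
  show "Rset m n lam \<nu> \<subseteq> PASM \<nu> lam m n"
    using main unfolding PASM_def Sset_def by blast
qed

end

theorem theorem1:
  fixes m n :: nat and lam \<nu> :: "nat \<Rightarrow> nat"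
  assumes "1 \<le> m" and "1 \<le> n"
    and "is_partition lam" and "is_partition \<nu>"
    and "part_le lam \<nu>"
    and "in_rect \<nu> (n - 1) (m - 1)"
  shows "PASM \<nu> lam m n =
    {X :: rmat. is_mat m n X
      \<and> (\<forall>i\<in>{1..m}. \<forall>j\<in>{1..n}. 0 \<le> (\<Sum>i'=1..i. X i' j) \<and> (\<Sum>i'=1..i. X i' j) \<le> 1)
      \<and> (\<forall>i\<in>{1..m}. \<forall>j\<in>{1..n}. 0 \<le> (\<Sum>j'=1..j. X i j') \<and> (\<Sum>j'=1..j. X i j') \<le> 1)
      \<and> (\<Sum>i=1..m. X i 1) = 1 \<and> (\<Sum>j=1..n. X 1 j) = 1
      \<and> (\<forall>i\<in>{2..m}. (\<Sum>j=1..n. X i j) = 0)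
      \<and> (\<forall>j\<in>{2..n}. (\<Sum>i=1..m. X i j) = 0)
      \<and> (\<forall>i\<in>{1..m}. \<forall>j\<in>{1..n}. j \<le> lam i \<longrightarrow> X i j = 0)
      \<and> (\<forall>i\<in>{2..m}. \<forall>j. \<nu> (i - 1) + 1 < j \<and> j \<le> n \<longrightarrow> X i j = 0)
      \<and> (\<forall>j. \<nu> 1 + 1 < j \<and> j \<le> n \<longrightarrow> X 1 j = 0)}"
  using PASM_eq[OF assms] unfolding Rset_def .

end
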